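(* Let $C$ be a subset of $Ob(CC(R,LM))$ closed under $ft$, and let $\le$ be a transitive relation on $C$ such that (1) $\Gamma\le\Gamma'$ implies $l(\Gamma)=l(\Gamma')$, and (2) for $\Gamma\in C$ and $F\in C$ with $ft(\Gamma)\le F$, one has $\sigma(\Gamma,F)\in C$ and $\Gamma\le\sigma(\Gamma,F)$. Then for $\Gamma\in C$ and $F\in C$ with $ft^i(\Gamma)\le F$ for some $i\ge1$, one has $\Gamma\le\sigma(\Gamma,F)$.
   Context: $[n]=\{1,\dots,n\}$; $R$ is a monad on Sets and $LM$ a left $R$-module with values in Sets. $Ob(CC(R,LM))$ is the set of finite sequences $(T_1,\dots,T_n)$, $n\ge0$, with $T_j\in LM([j-1])$; $l(T_1,\dots,T_n)=n$; $ft(T_1,\dots,T_n)=(T_1,\dots,T_{n-1})$ for $n\ge1$ and $ft()=()$. For $\Gamma=(T_1,\dots,T_{n+k})$ with $k>0$ and $\Gamma'=(T'_1,\dots,T'_n)$, $\sigma(\Gamma,\Gamma'):=(T'_1,\dots,T'_n,T_{n+1},\dots,T_{n+k})$ (defined only when $l(\Gamma)>l(\Gamma')$). *)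

theory Defs
  imports Main
begin

(* LM n  stands for the set LM([n]).  An object (T_1,...,T_n) is a list whose
   0-indexed entry j (= T_(j+1)) lies in LM([j]). *)
definition CC_Ob :: "(nat \<Rightarrow> 'a set) \<Rightarrow> 'a list set" where
  "CC_Ob LM = {Ts. \<forall>j < length Ts. Ts ! j \<in> LM j}"

definition CC_l :: "'a list \<Rightarrow> nat" where
  "CC_l Ts = length Ts"

definition CC_ft :: "'a list \<Rightarrow> 'a list" where
  "CC_ft Ts = butlast Ts"

(* sigma(Gamma,Gamma') = (T'_1..T'_n, T_(n+1)..T_(n+k)); only meaningful when
   CC_l Gamma > CC_l Gamma' *)
definition CC_sigma :: "'a list \<Rightarrow> 'a list \<Rightarrow> 'a list" where
  "CC_sigma Gamma Gamma' = Gamma' @ drop (length Gamma') Gamma"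

end

theory Submission
  imports Defs
begin

lemma ft_pow: "(CC_ft ^^ i) xs = take (length xs - i) xs"
  by (induction i) (auto simp: CC_ft_def butlast_take)

lemma ft_pow_Suc: "(CC_ft ^^ Suc i) xs = (CC_ft ^^ i) (CC_ft xs)"
  by (metis comp_apply funpow_Suc_right)

lemma aux: "n < length G - 1 \<Longrightarrow> butlast (drop n G) @ drop (length G - 1) G = drop n G"
proof -
  assume a: "n < length G - 1"
  have "drop (length G - 1) G = drop (length (drop n G) - 1) (drop n G)" using a by simp
  moreover have "drop (length xs - 1) xs = [last xs]" if "xs \<noteq> []" for xs :: "'a list"
    using that by (metis append_butlast_last_id append_eq_conv_conj length_butlast)
  ultimately show ?thesis using a
    by (metis (no_types) append_butlast_last_id drop_eq_Nil2 not_less order.strict_trans2 diff_le_self)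
qed

theorem lemma6p7:
  fixes LM :: "nat \<Rightarrow> 'a set"
    and C :: "'a list set"
    and le :: "'a list \<Rightarrow> 'a list \<Rightarrow> bool"
  assumes C_sub: "C \<subseteq> CC_Ob LM"
    and C_ft: "\<And>Gamma. Gamma \<in> C \<Longrightarrow> CC_ft Gamma \<in> C"
    and le_trans: "\<And>X Y Z. X \<in> C \<Longrightarrow> Y \<in> C \<Longrightarrow> Z \<in> C \<Longrightarrow> le X Y \<Longrightarrow> le Y Z \<Longrightarrow> le X Z"
    and le_l: "\<And>X Y. X \<in> C \<Longrightarrow> Y \<in> C \<Longrightarrow> le X Y \<Longrightarrow> CC_l X = CC_l Y"
    and le_sigma: "\<And>Gamma F. Gamma \<in> C \<Longrightarrow> F \<in> C \<Longrightarrow> CC_l F < CC_l Gamma \<Longrightarrow>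
        le (CC_ft Gamma) F \<Longrightarrow> CC_sigma Gamma F \<in> C \<and> le Gamma (CC_sigma Gamma F)"
    and Gamma: "Gamma \<in> C" and F: "F \<in> C"
    and i: "i \<ge> 1" and le_i: "le ((CC_ft ^^ i) Gamma) F"
    and defd: "CC_l F < CC_l Gamma"
  shows "le Gamma (CC_sigma Gamma F)"
proof -
  have main: "\<And>G. G \<in> C \<Longrightarrow> le ((CC_ft ^^ Suc j) G) F \<Longrightarrow> CC_l F < CC_l G \<Longrightarrow>
      CC_sigma G F \<in> C \<and> le G (CC_sigma G F)" for j
  proof (induction j)
    case 0
    then show ?case using le_sigma F by simp
  next
    case (Suc j)
    let ?G' = "CC_ft (G::'a list)"
    have G'C: "?G' \<in> C" using C_ft Suc.prems by blast
    have fp: "(CC_ft ^^ Suc (Suc j)) G \<in> C"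
    proof -
      have "\<And>k H. H \<in> C \<Longrightarrow> (CC_ft ^^ k) H \<in> C"
      proof -
        fix k H assume "H \<in> C" thus "(CC_ft ^^ k) H \<in> C" by (induction k) (simp_all add: C_ft)
      qed
      thus ?thesis using Suc.prems(1) by blast
    qed
    have lenF: "length F = length G - Suc (Suc j)"
      using le_l[OF fp F Suc.prems(2)] by (simp only: CC_l_def ft_pow length_take)
    show ?case
    proof (cases "CC_l F < CC_l ?G'")
      case True
      have h: "le ((CC_ft ^^ Suc j) ?G') F" using Suc.prems(2) by (simp only: ft_pow_Suc)
      from Suc.IH[OF G'C h True] have ih: "CC_sigma ?G' F \<in> C" "le ?G' (CC_sigma ?G' F)" by auto
      have len: "CC_l (CC_sigma ?G' F) < CC_l G" using True
        by (simp add: CC_sigma_def CC_ft_def CC_l_def)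
      from le_sigma[OF Suc.prems(1) ih(1) len ih(2)]
      have r: "CC_sigma G (CC_sigma ?G' F) \<in> C \<and> le G (CC_sigma G (CC_sigma ?G' F))" .
      have eq2: "CC_sigma G (CC_sigma ?G' F) = CC_sigma G F" using True
        by (simp add: CC_sigma_def CC_ft_def CC_l_def drop_butlast aux[of "length F" G, simplified])
      show ?thesis using r eq2 by simp
    next
      case False
      hence "length G \<le> 1" using lenF Suc.prems(3) by (simp add: CC_l_def CC_ft_def)
      hence e: "(CC_ft ^^ Suc (Suc j)) G = CC_ft G" by (simp only: ft_pow CC_ft_def) (cases G, auto)
      show ?thesis using le_sigma[OF Suc.prems(1) F Suc.prems(3)] Suc.prems(2) e by simp
    qed
  qed
  obtain j where "i = Suc j" using i by (cases i) auto
  thus ?thesis using main Gamma le_i defd by blast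
qed

end
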